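(* Let $q$ be a prime power, let $1\le t<k\le m$ be integers, and let $M\in\mathrm{Mat}(t\times k,\mathbb{F}_{q^m})$ be a full-rank matrix almost in row-reduced echelon form, with rows $M_1,\dots,M_t$. Assume that $M_1$ has at least one entry in $\mathbb{F}_{q^m}\setminus\mathbb{F}_q$. Then there exist $\mathbb{F}_q$-linearly independent elements $\alpha_1,\dots,\alpha_t\in\mathbb{F}_{q^m}$ such that $\mathrm{rk}\left(\sum_{i=1}^t\alpha_iM_i\right)\ge t+1$.
   Context: For $v\in\mathbb{F}_{q^m}^k$, $\mathrm{rk}(v):=\dim_{\mathbb{F}_q}\mathrm{Span}_{\mathbb{F}_q}\{v_1,\dots,v_k\}$. A matrix is in row-reduced echelon form if each row has more initial zeros than the previous rows, and the first non-zero entry of any non-zero row equals $1$ and is the only non-zero entry in its column. A $t\times k$ matrix $M$ is almost in row-reduced echelon form if the matrix obtained by permuting its rows by some permutation of $\{1,\dots,t\}$ is in row-reduced echelon form. *)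

theory Defs
  imports "HOL-Computational_Algebra.Primes"
begin

definition is_subfield :: "'a::field set \<Rightarrow> bool" where
  "is_subfield F \<longleftrightarrow> 0 \<in> F \<and> 1 \<in> F \<and>
     (\<forall>x\<in>F. \<forall>y\<in>F. x + y \<in> F \<and> x * y \<in> F) \<and>
     (\<forall>x\<in>F. - x \<in> F) \<and> (\<forall>x\<in>F. x \<noteq> 0 \<longrightarrow> inverse x \<in> F)"

definition prime_power :: "nat \<Rightarrow> bool" where
  "prime_power q \<longleftrightarrow> (\<exists>p n. prime p \<and> n \<ge> 1 \<and> q = p ^ n)"

definition lin_indep_set_over :: "'a::field set \<Rightarrow> 'a set \<Rightarrow> bool" where
  "lin_indep_set_over F S \<longleftrightarrow> finite S \<and>
     (\<forall>c. (\<forall>x\<in>S. c x \<in> F) \<longrightarrow> (\<Sum>x\<in>S. c x * x) = 0 \<longrightarrow> (\<forall>x\<in>S. c x = 0))"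

definition lin_indep_family_over :: "'a::field set \<Rightarrow> nat \<Rightarrow> (nat \<Rightarrow> 'a) \<Rightarrow> bool" where
  "lin_indep_family_over F t \<alpha> \<longleftrightarrow>
     (\<forall>c. (\<forall>i<t. c i \<in> F) \<longrightarrow> (\<Sum>i<t. c i * \<alpha> i) = 0 \<longrightarrow> (\<forall>i<t. c i = 0))"

(* rk(v) = dim_F Span_F {v_0,...,v_{k-1}}, i.e. the maximal size of an
   F-linearly independent subset of the entries *)
definition rk_over :: "'a::field set \<Rightarrow> nat \<Rightarrow> (nat \<Rightarrow> 'a) \<Rightarrow> nat" where
  "rk_over F k v = Max {card S | S. S \<subseteq> v ` {0..<k} \<and> lin_indep_set_over F S}"

(* Matrices t x k are functions nat => nat => 'a, entries A i j for i<t, j<k. *)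
definition row_nonzero :: "nat \<Rightarrow> (nat \<Rightarrow> nat \<Rightarrow> 'a::zero) \<Rightarrow> nat \<Rightarrow> bool" where
  "row_nonzero k A i \<longleftrightarrow> (\<exists>j<k. A i j \<noteq> 0)"

definition lead_pos :: "nat \<Rightarrow> (nat \<Rightarrow> nat \<Rightarrow> 'a::zero) \<Rightarrow> nat \<Rightarrow> nat" where
  "lead_pos k A i = (if row_nonzero k A i then (LEAST j. A i j \<noteq> 0) else k)"

definition rref :: "nat \<Rightarrow> nat \<Rightarrow> (nat \<Rightarrow> nat \<Rightarrow> 'a::{zero,one}) \<Rightarrow> bool" where
  "rref t k A \<longleftrightarrow>
     (\<forall>i1 i2. i1 < i2 \<and> i2 < t \<and> row_nonzero k A i2 \<longrightarrow>
         row_nonzero k A i1 \<and> lead_pos k A i1 < lead_pos k A i2) \<and>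
     (\<forall>i<t. row_nonzero k A i \<longrightarrow>
         A i (lead_pos k A i) = 1 \<and>
         (\<forall>i'<t. i' \<noteq> i \<longrightarrow> A i' (lead_pos k A i) = 0))"

definition almost_rref :: "nat \<Rightarrow> nat \<Rightarrow> (nat \<Rightarrow> nat \<Rightarrow> 'a::{zero,one}) \<Rightarrow> bool" where
  "almost_rref t k A \<longleftrightarrow>
     (\<exists>\<sigma>. bij_betw \<sigma> {0..<t} {0..<t} \<and> rref t k (\<lambda>i j. A (\<sigma> i) j))"

definition full_row_rank :: "nat \<Rightarrow> nat \<Rightarrow> (nat \<Rightarrow> nat \<Rightarrow> 'a::field) \<Rightarrow> bool" where
  "full_row_rank t k A \<longleftrightarrow>
     (\<forall>c. (\<forall>j<k. (\<Sum>i<t. c i * A i j) = 0) \<longrightarrow> (\<forall>i<t. c i = 0))"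

end

theory Submission
  imports Defs "HOL-Library.FuncSet"
begin

definition indep :: "'a::field set \<Rightarrow> nat set \<Rightarrow> (nat \<Rightarrow> 'a) \<Rightarrow> bool" where
  "indep F I \<alpha> \<longleftrightarrow> (\<forall>c. (\<forall>i\<in>I. c i \<in> F) \<longrightarrow> (\<Sum>i\<in>I. c i * \<alpha> i) = 0 \<longrightarrow> (\<forall>i\<in>I. c i = 0))"

definition spn :: "'a::field set \<Rightarrow> nat set \<Rightarrow> (nat \<Rightarrow> 'a) \<Rightarrow> 'a set" where
  "spn F I \<alpha> = {\<Sum>i\<in>I. c i * \<alpha> i | c. \<forall>i\<in>I. c i \<in> F}"

lemma sf_mult: "is_subfield F \<Longrightarrow> x \<in> F \<Longrightarrow> y \<in> F \<Longrightarrow> x * y \<in> F"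
  unfolding is_subfield_def by blast
lemma sf_neg: "is_subfield F \<Longrightarrow> x \<in> F \<Longrightarrow> - x \<in> F"
  unfolding is_subfield_def by blast
lemma sf_inv: "is_subfield F \<Longrightarrow> x \<in> F \<Longrightarrow> inverse x \<in> F"
  unfolding is_subfield_def by (cases "x = 0") auto

lemma indep_extend:
  assumes F: "is_subfield F" and ind: "indep F I \<alpha>" and fin: "finite I" and i0: "i0 \<notin> I"
    and x: "x \<notin> spn F I \<alpha>"
  shows "indep F (insert i0 I) (\<alpha>(i0:=x))"
  unfolding indep_def
proof (intro allI impI)
  fix c assume c: "\<forall>i\<in>insert i0 I. c i \<in> F"
    and s: "(\<Sum>i\<in>insert i0 I. c i * (\<alpha>(i0:=x)) i) = 0"
  have e: "(\<Sum>i\<in>I. c i * (\<alpha>(i0:=x)) i) = (\<Sum>i\<in>I. c i * \<alpha> i)"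
    by (rule sum.cong) (use i0 in auto)
  have s2: "c i0 * x + (\<Sum>i\<in>I. c i * \<alpha> i) = 0"
    using s fin i0 e by (simp add: sum.insert)
  have ci0: "c i0 = 0"
  proof (rule ccontr)
    assume nz: "c i0 \<noteq> 0"
    define d where "d i = c i * (- inverse (c i0))" for i
    have "(\<Sum>i\<in>I. d i * \<alpha> i) = (\<Sum>i\<in>I. c i * \<alpha> i) * (- inverse (c i0))"
      unfolding d_def sum_distrib_right by (rule sum.cong) (simp_all add: algebra_simps)
    also have "(\<Sum>i\<in>I. c i * \<alpha> i) = - (c i0 * x)" using s2 by (simp add: add_eq_0_iff)
    also have "- (c i0 * x) * (- inverse (c i0)) = x" using nz by simp
    finally have xe: "x = (\<Sum>i\<in>I. d i * \<alpha> i)" by simp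
    have "\<forall>i\<in>I. d i \<in> F" unfolding d_def
      using c F by (auto intro!: sf_mult sf_neg sf_inv)
    with xe have "x \<in> spn F I \<alpha>" unfolding spn_def by blast
    with x show False by simp
  qed
  then have "(\<Sum>i\<in>I. c i * \<alpha> i) = 0" using s2 by simp
  then have "\<forall>i\<in>I. c i = 0" using ind c unfolding indep_def by blast
  with ci0 show "\<forall>i\<in>insert i0 I. c i = 0" by simp
qed

lemma card_spn:
  assumes "finite F" "finite I"
  shows "card (spn F I \<alpha>) \<le> card F ^ card I"
proof -
  have "spn F I \<alpha> \<subseteq> (\<lambda>c. \<Sum>i\<in>I. c i * \<alpha> i) ` (PiE I (\<lambda>_. F))"
  proof
    fix y assume "y \<in> spn F I \<alpha>"
    then obtain c where c: "\<forall>i\<in>I. c i \<in> F" "y = (\<Sum>i\<in>I. c i * \<alpha> i)"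
      unfolding spn_def by blast
    have "restrict c I \<in> PiE I (\<lambda>_. F)" using c by auto
    moreover have "y = (\<Sum>i\<in>I. restrict c I i * \<alpha> i)"
      unfolding c(2) by (rule sum.cong) auto
    ultimately show "y \<in> (\<lambda>c. \<Sum>i\<in>I. c i * \<alpha> i) ` (PiE I (\<lambda>_. F))" by blast
  qed
  then have "card (spn F I \<alpha>) \<le> card ((\<lambda>c. \<Sum>i\<in>I. c i * \<alpha> i) ` (PiE I (\<lambda>_. F)))"
    by (intro card_mono finite_imageI finite_PiE) (use assms in auto)
  also have "\<dots> \<le> card (PiE I (\<lambda>_. F))" by (rule card_image_le) (intro finite_PiE, use assms in auto)
  also have "\<dots> = card F ^ card I" using assms by (simp add: card_PiE)
  finally show ?thesis .
qed

lemma exists_indep: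
  fixes F :: "'a::{finite,field} set"
  assumes F: "is_subfield F" and cF: "card F = q" and cU: "card (UNIV :: 'a set) = q ^ m"
    and q: "q \<ge> 2" and fin: "finite I"
  shows "card I \<le> m \<Longrightarrow> \<exists>\<alpha>. indep F I \<alpha>"
  using fin
proof (induction I rule: finite_induct)
  case empty
  show ?case unfolding indep_def by auto
next
  case (insert i I)
  then have cI: "card I < m" by simp
  from insert.IH cI obtain \<alpha> where a: "indep F I \<alpha>" by auto
  have "card (spn F I \<alpha>) \<le> q ^ card I" using card_spn[of F I \<alpha>] cF insert by simp
  also have "\<dots> < q ^ m" using cI q by (simp add: power_strict_increasing)
  finally have "spn F I \<alpha> \<noteq> UNIV" using cU by auto
  then obtain x where "x \<notin> spn F I \<alpha>" by blast
  then show ?case using indep_extend[OF F a insert(1) insert(2)] by blast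
qed

lemma indep_set:
  assumes F: "is_subfield F" and fin: "finite I" and ind: "indep F I \<alpha>"
  shows "inj_on \<alpha> I" "lin_indep_set_over F (\<alpha> ` I)" "card (\<alpha> ` I) = card I"
proof -
  show inj: "inj_on \<alpha> I"
  proof (rule inj_onI, rule ccontr)
    fix a b assume a: "a \<in> I" and b: "b \<in> I" and e: "\<alpha> a = \<alpha> b" and ne: "a \<noteq> b"
    define c where "c j = (if j = a then 1 else if j = b then -1 else (0::'a))" for j
    have "(\<Sum>j\<in>I. c j * \<alpha> j) = (\<Sum>j\<in>I. (if j = a then \<alpha> a else 0) + (if j = b then - \<alpha> b else 0))"
      by (rule sum.cong) (use ne in \<open>auto simp: c_def\<close>)
    also have "\<dots> = \<alpha> a - \<alpha> b" using a b fin by (simp add: sum.distrib)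
    finally have "(\<Sum>j\<in>I. c j * \<alpha> j) = 0" using e by simp
    moreover have "\<forall>j\<in>I. c j \<in> F" using F unfolding c_def is_subfield_def by auto
    ultimately have "c a = 0" using ind a unfolding indep_def by blast
    then show False unfolding c_def by simp
  qed
  show "card (\<alpha> ` I) = card I" using inj by (simp add: card_image)
  show "lin_indep_set_over F (\<alpha> ` I)"
    unfolding lin_indep_set_over_def
  proof (intro conjI allI impI)
    show "finite (\<alpha> ` I)" using fin by simp
    fix c assume c: "\<forall>x\<in>\<alpha> ` I. c x \<in> F" and s: "(\<Sum>x\<in>\<alpha> ` I. c x * x) = 0"
    have "(\<Sum>i\<in>I. c (\<alpha> i) * \<alpha> i) = 0" using s sum.reindex[OF inj, of "\<lambda>x. c x * x"] by simp
    then have "\<forall>i\<in>I. c (\<alpha> i) = 0" using ind c unfolding indep_def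
      by (erule_tac x="\<lambda>i. c (\<alpha> i)" in allE) auto
    then show "\<forall>x\<in>\<alpha> ` I. c x = 0" by blast
  qed
qed

lemma sum_upd_I:
  assumes "i0 \<notin> I"
  shows "(\<Sum>i\<in>I. (g(i0:=x)) i * h i) = (\<Sum>i\<in>I. g i * h i)"
  by (rule sum.cong) (use assms in auto)

theorem proposition3p10:
  fixes q m t k :: nat
    and Fq :: "'a::{finite,field} set"
    and M :: "nat \<Rightarrow> nat \<Rightarrow> 'a"
  assumes "prime_power q"
    and "card (UNIV :: 'a set) = q ^ m"
    and "is_subfield Fq" and "card Fq = q"
    and "1 \<le> t" and "t < k" and "k \<le> m"
    and "full_row_rank t k M"
    and "almost_rref t k M"
    and "\<exists>j<k. M 0 j \<notin> Fq"
  shows "\<exists>\<alpha> :: nat \<Rightarrow> 'a. lin_indep_family_over Fq t \<alpha> \<and>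
           rk_over Fq k (\<lambda>j. \<Sum>i<t. \<alpha> i * M i j) \<ge> t + 1"
proof -
  note F = assms(3)
  obtain p n where pp: "prime p" "n \<ge> 1" "q = p ^ n"
    using assms(1) unfolding prime_power_def by blast
  have "p \<ge> 2" using pp(1) prime_ge_2_nat by blast
  moreover have "p \<le> p ^ n" using pp(2) \<open>p \<ge> 2\<close> by (simp add: self_le_power)
  ultimately have q2: "q \<ge> 2" using pp(3) by simp
  obtain j0 where j0: "j0 < k" "M 0 j0 \<notin> Fq" using assms(10) by blast
  define \<beta> where "\<beta> = M 0 j0"
  have piv: "\<exists>pc<k. M r pc = 1 \<and> (\<forall>r'<t. r' \<noteq> r \<longrightarrow> M r' pc = 0)" if r: "r < t" for r
  proof -
    obtain \<sigma> where bij: "bij_betw \<sigma> {0..<t} {0..<t}" and rr: "rref t k (\<lambda>i j. M (\<sigma> i) j)"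
      using assms(9) unfolding almost_rref_def by blast
    define N where "N = (\<lambda>i j. M (\<sigma> i) j)"
    have "r \<in> \<sigma> ` {0..<t}" using bij r unfolding bij_betw_def by auto
    then obtain i where i: "i < t" "\<sigma> i = r" by auto
    have nz: "row_nonzero k M r"
    proof (rule ccontr)
      assume "\<not> row_nonzero k M r"
      then have z: "\<forall>j<k. M r j = 0" unfolding row_nonzero_def by auto
      define c where "c i = (if i = r then 1 else (0::'a))" for i
      have "\<forall>j<k. (\<Sum>i<t. c i * M i j) = 0"
      proof (intro allI impI)
        fix j assume "j < k"
        have "(\<Sum>i<t. c i * M i j) = (\<Sum>i<t. if i = r then M r j else 0)"
          by (rule sum.cong) (auto simp: c_def)
        also have "\<dots> = 0" using z \<open>j < k\<close> by simp
        finally show "(\<Sum>i<t. c i * M i j) = 0" .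
      qed
      then have "c r = 0" using assms(8) r unfolding full_row_rank_def by blast
      then show False unfolding c_def by simp
    qed
    have nzN: "row_nonzero k N i" using nz i unfolding N_def row_nonzero_def by simp
    define pc where "pc = lead_pos k N i"
    have pcdef: "pc = (LEAST j. N i j \<noteq> 0)" using nzN unfolding pc_def lead_pos_def by simp
    obtain j1 where j1: "j1 < k" "N i j1 \<noteq> 0" using nzN unfolding row_nonzero_def by blast
    have "pc \<le> j1" unfolding pcdef using j1(2) by (rule Least_le)
    then have pck: "pc < k" using j1 by simp
    have r2: "N i pc = 1 \<and> (\<forall>i'<t. i' \<noteq> i \<longrightarrow> N i' pc = 0)"
      using rr nzN i(1) unfolding rref_def N_def pc_def by blast
    have "\<forall>r'<t. r' \<noteq> r \<longrightarrow> M r' pc = 0"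
    proof (intro allI impI)
      fix r' assume r': "r' < t" "r' \<noteq> r"
      have "r' \<in> \<sigma> ` {0..<t}" using bij r'(1) unfolding bij_betw_def by auto
      then obtain i' where i': "i' < t" "\<sigma> i' = r'" by auto
      have "i' \<noteq> i" using i i' r' by auto
      then show "M r' pc = 0" using r2 i' unfolding N_def by auto
    qed
    then show ?thesis using r2 i pck unfolding N_def by auto
  qed
  define I where "I = {1..<t}"
  have I: "finite I" "0 \<notin> I" "insert 0 I = {..<t}" "card I = t - 1"
    using assms(5) unfolding I_def by auto
  have "card I \<le> m" using I(4) assms(6,7) by simp
  then obtain \<gamma> where \<gamma>: "indep Fq I \<gamma>"
    using exists_indep[OF F assms(4) assms(2) q2 I(1)] by blast
  define P where "P = spn Fq I \<gamma>"
  define u where "u = (\<Sum>i\<in>I. \<gamma> i * M i j0)"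
  define B where "B = (\<lambda>l. {x. (\<beta> - l) * x + u \<in> P})"
  define Bad where "Bad = P \<union> (\<Union>l\<in>Fq. B l)"
  have cP: "card P \<le> q ^ (t - 1)"
    using card_spn[of Fq I \<gamma>] I assms(4) unfolding P_def by simp
  have cB: "card (B l) \<le> q ^ (t - 1)" if l: "l \<in> Fq" for l
  proof -
    have ne: "\<beta> - l \<noteq> 0" using l j0(2) unfolding \<beta>_def by auto
    have "B l \<subseteq> (\<lambda>y. (y - u) / (\<beta> - l)) ` P"
    proof
      fix x assume "x \<in> B l"
      then have "(\<beta> - l) * x + u \<in> P" unfolding B_def by simp
      moreover have "x = (((\<beta> - l) * x + u) - u) / (\<beta> - l)" using ne by simp
      ultimately show "x \<in> (\<lambda>y. (y - u) / (\<beta> - l)) ` P" by blast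
    qed
    then have "card (B l) \<le> card ((\<lambda>y. (y - u) / (\<beta> - l)) ` P)" by (simp add: card_mono)
    also have "\<dots> \<le> card P" by (simp add: card_image_le)
    finally show ?thesis using cP by simp
  qed
  have "card Bad \<le> card P + card (\<Union>l\<in>Fq. B l)" unfolding Bad_def by (rule card_Un_le)
  also have "card (\<Union>l\<in>Fq. B l) \<le> (\<Sum>l\<in>Fq. card (B l))" by (rule card_UN_le) simp
  also have "\<dots> \<le> card Fq * q ^ (t - 1)" using cB sum_bounded_above[of Fq "\<lambda>l. card (B l)"] by simp
  finally have cBad: "card Bad \<le> q ^ (t - 1) + q * q ^ (t - 1)" using cP assms(4) by simp
  have "q ^ (t - 1) + q * q ^ (t - 1) = q ^ (t - 1) * (1 + q)" by (simp add: algebra_simps)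
  also have "\<dots> < q ^ (t - 1) * (q * q)"
  proof (rule mult_strict_left_mono)
    have "2 * q \<le> q * q" using q2 by (intro mult_le_mono1) 
    then show "1 + q < q * q" using q2 by linarith
    show "0 < q ^ (t - 1)" using q2 by simp
  qed
  also have "\<dots> = q ^ (t + 1)" using assms(5)
    by (metis Suc_eq_plus1 le_add_diff_inverse2 mult.assoc power_Suc2)
  also have "\<dots> \<le> q ^ m" using assms(6,7) q2 by (intro power_increasing) auto
  finally have "card Bad < card (UNIV :: 'a set)" using cBad assms(2) by simp
  then have "Bad \<noteq> UNIV" by auto
  then obtain x where x: "x \<notin> Bad" by blast
  define \<alpha> where "\<alpha> = \<gamma>(0:=x)"
  have xP: "x \<notin> spn Fq I \<gamma>" using x unfolding Bad_def P_def by simp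
  have ind\<alpha>: "indep Fq {..<t} \<alpha>"
    using indep_extend[OF F \<gamma> I(1) I(2) xP] I(3) unfolding \<alpha>_def by simp
  define w where "w = (\<Sum>i<t. \<alpha> i * M i j0)"
  have "w = (\<Sum>i\<in>insert 0 I. \<alpha> i * M i j0)" unfolding w_def I(3) ..
  also have "\<dots> = \<alpha> 0 * M 0 j0 + (\<Sum>i\<in>I. \<alpha> i * M i j0)" using I(1,2) by (simp add: sum.insert)
  also have "(\<Sum>i\<in>I. \<alpha> i * M i j0) = u" unfolding \<alpha>_def u_def by (rule sum_upd_I[OF I(2)])
  also have "\<alpha> 0 * M 0 j0 = x * \<beta>" unfolding \<alpha>_def \<beta>_def by simp
  finally have wd: "w = \<beta> * x + u" by (simp add: mult.commute)
  have wn: "w \<notin> spn Fq {..<t} \<alpha>"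
  proof
    assume "w \<in> spn Fq {..<t} \<alpha>"
    then obtain d where d: "\<forall>i\<in>{..<t}. d i \<in> Fq" "w = (\<Sum>i<t. d i * \<alpha> i)"
      unfolding spn_def by blast
    have "w = (\<Sum>i\<in>insert 0 I. d i * \<alpha> i)" unfolding d(2) I(3) ..
    also have "\<dots> = d 0 * \<alpha> 0 + (\<Sum>i\<in>I. \<alpha> i * d i)" using I(1,2) by (simp add: sum.insert mult.commute)
    also have "(\<Sum>i\<in>I. \<alpha> i * d i) = (\<Sum>i\<in>I. \<gamma> i * d i)" unfolding \<alpha>_def by (rule sum_upd_I[OF I(2)])
    also have "\<dots> = (\<Sum>i\<in>I. d i * \<gamma> i)" by (simp add: mult.commute)
    also have "d 0 * \<alpha> 0 = d 0 * x" unfolding \<alpha>_def by simp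
    finally have "(\<beta> - d 0) * x + u = (\<Sum>i\<in>I. d i * \<gamma> i)" using wd by (simp add: algebra_simps)
    moreover have "\<forall>i\<in>I. d i \<in> Fq" using d(1) I(3) by auto
    ultimately have "(\<beta> - d 0) * x + u \<in> P" unfolding P_def spn_def by blast
    moreover have "d 0 \<in> Fq" using d(1) assms(5) by auto
    ultimately have "x \<in> Bad" unfolding Bad_def B_def by blast
    with x show False by simp
  qed
  define \<alpha>' where "\<alpha>' = \<alpha>(t:=w)"
  have ind': "indep Fq (insert t {..<t}) \<alpha>'"
    unfolding \<alpha>'_def by (rule indep_extend[OF F ind\<alpha> _ _ wn]) auto
  define S where "S = \<alpha>' ` insert t {..<t}"
  have Sli: "lin_indep_set_over Fq S" and Sc: "card S = t + 1"
    using indep_set[OF F _ ind'] unfolding S_def by auto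
  define v where "v = (\<lambda>j. \<Sum>i<t. \<alpha> i * M i j)"
  have Ssub: "S \<subseteq> v ` {0..<k}"
  proof
    fix y assume "y \<in> S"
    then obtain i where i: "i \<in> insert t {..<t}" "y = \<alpha>' i" unfolding S_def by blast
    show "y \<in> v ` {0..<k}"
    proof (cases "i = t")
      case True
      then have "y = v j0" using i unfolding \<alpha>'_def v_def w_def by simp
      then show ?thesis using j0 by auto
    next
      case False
      then have it: "i < t" using i by auto
      obtain pc where pc: "pc < k" "M i pc = 1" "\<forall>r'<t. r' \<noteq> i \<longrightarrow> M r' pc = 0"
        using piv[OF it] by blast
      have "v pc = (\<Sum>r<t. if r = i then \<alpha> i else 0)"
        unfolding v_def by (rule sum.cong) (use pc in auto)
      also have "\<dots> = \<alpha> i" using it by simp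
      finally have "y = v pc" using i False unfolding \<alpha>'_def by simp
      then show ?thesis using pc by auto
    qed
  qed
  have fin: "finite {card S | S. S \<subseteq> v ` {0..<k} \<and> lin_indep_set_over Fq S}"
  proof (rule finite_subset)
    show "{card S | S. S \<subseteq> v ` {0..<k} \<and> lin_indep_set_over Fq S} \<subseteq> card ` Pow (v ` {0..<k})"
      by blast
  qed simp
  have "card S \<le> rk_over Fq k v"
    unfolding rk_over_def by (rule Max_ge[OF fin]) (use Ssub Sli in blast)
  moreover have "lin_indep_family_over Fq t \<alpha>"
    using ind\<alpha> unfolding indep_def lin_indep_family_over_def by auto
  ultimately show ?thesis using Sc unfolding v_def by auto
qed

end
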